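(* In the DGL-test-based classification setting described in the context, with $M\ge2$, $n,N\ge1$, $\alpha=N/n$ and $D=\min_{i\neq j}V(P_i,P_j)$, the classification error probability satisfies, for every prior $(\pi_1,\dots,\pi_M)$, $$\Pr[e_{\mathrm{CL}}]\le 2M\exp\!\Big(-n\Big(\frac{2\alpha D^2}{(3|\mathcal X|+2\sqrt\alpha)^2}-\max\Big\{\frac{2\ln(M-1)}{n},\frac{\ln|\mathcal X|}{n}\Big\}\Big)\Big).$$
   Context: Setting: $\mathcal X$ is a finite alphabet and $P_1,\dots,P_M$ are (unknown) distributions on $\mathcal X$. For distributions $P,Q$ on $\mathcal X$, $V(P,Q)=\max_{F\subseteq\mathcal X}|P(F)-Q(F)|=\frac12\sum_{a}|P(a)-Q(a)|$. Training sequences $\vec t_i^{\,N}=(t_{i1},\dots,t_{iN})$, $i=1,\dots,M$, are mutually independent, with $\vec t_i^{\,N}$ i.i.d. from $P_i$; $T_i(a)=\frac1N\#\{k:t_{ik}=a\}$ is its empirical distribution, and $T_i(A)=\sum_{a\in A}T_i(a)$. Under hypothesis $\mathcal H_i$, the test sequence $\vec x^{\,n}=(x_1,\dots,x_n)$ is i.i.d. from $P_i$ and independent of the training sequences. Classifier (DGL test with nominal distributions $T_i$): let $\mathcal A=\{A_{k,l}:1\le k<l\le M\}$ with $A_{k,l}=\{a\in\mathcal X: T_k(a)\ge T_l(a)\}$, let $\mu_n(A)=\frac1n\#\{m: x_m\in A\}$, define the score $s_j=\max_{A\in\mathcal A}|T_j(A)-\mu_n(A)|$, and output any index $\hat\imath$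 minimizing $s_j$ over $j$ (ties broken arbitrarily). Given a prior $\pi_i>0$, $\sum_i\pi_i=1$, the classification error probability is $\Pr[e_{\mathrm{CL}}]=\sum_{i=1}^M\pi_i\Pr[\hat\imath\neq i\mid\mathcal H_i]$, the probability taken over both the test and training sequences. *)

theory Defs
  imports "HOL-Probability.Probability"
begin

definition tv_dist :: "'a::finite pmf \<Rightarrow> 'a pmf \<Rightarrow> real" where
  "tv_dist P Q = (\<Sum>a\<in>UNIV. \<bar>pmf P a - pmf Q a\<bar>) / 2"

definition emp :: "nat \<Rightarrow> (nat \<Rightarrow> nat \<Rightarrow> 'a) \<Rightarrow> nat \<Rightarrow> 'a \<Rightarrow> real" where
  "emp N t i a = real (card {k \<in> {1..N}. t i k = a}) / real N"

definition emp_set :: "nat \<Rightarrow> (nat \<Rightarrow> nat \<Rightarrow> 'a) \<Rightarrow> nat \<Rightarrow> 'a set \<Rightarrow> real" where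
  "emp_set N t i A = (\<Sum>a\<in>A. emp N t i a)"

definition mu_n :: "nat \<Rightarrow> (nat \<Rightarrow> 'a) \<Rightarrow> 'a set \<Rightarrow> real" where
  "mu_n n x A = real (card {m \<in> {1..n}. x m \<in> A}) / real n"

definition scheffe :: "nat \<Rightarrow> (nat \<Rightarrow> nat \<Rightarrow> 'a) \<Rightarrow> nat \<Rightarrow> nat \<Rightarrow> 'a set" where
  "scheffe N t k l = {a. emp N t k a \<ge> emp N t l a}"

definition scheffe_family :: "nat \<Rightarrow> nat \<Rightarrow> (nat \<Rightarrow> nat \<Rightarrow> 'a) \<Rightarrow> 'a set set" where
  "scheffe_family M N t = {scheffe N t k l | k l. 1 \<le> k \<and> k < l \<and> l \<le> M}"

definition dgl_score :: "nat \<Rightarrow> nat \<Rightarrow> nat \<Rightarrow> (nat \<Rightarrow> nat \<Rightarrow> 'a) \<Rightarrow> (nat \<Rightarrow> 'a) \<Rightarrow> nat \<Rightarrow> real" where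
  "dgl_score M N n t x j = Max ((\<lambda>A. \<bar>emp_set N t j A - mu_n n x A\<bar>) ` scheffe_family M N t)"

definition train_space :: "nat \<Rightarrow> nat \<Rightarrow> (nat \<Rightarrow> nat \<Rightarrow> 'a) set" where
  "train_space M N = {1..M} \<rightarrow>\<^sub>E ({1..N} \<rightarrow>\<^sub>E UNIV)"

definition test_space :: "nat \<Rightarrow> (nat \<Rightarrow> 'a) set" where
  "test_space n = {1..n} \<rightarrow>\<^sub>E UNIV"

definition joint_prob :: "nat \<Rightarrow> nat \<Rightarrow> nat \<Rightarrow> (nat \<Rightarrow> 'a pmf) \<Rightarrow> nat
    \<Rightarrow> (nat \<Rightarrow> nat \<Rightarrow> 'a) \<Rightarrow> (nat \<Rightarrow> 'a) \<Rightarrow> real" where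
  "joint_prob M N n P i t x =
     (\<Prod>j\<in>{1..M}. \<Prod>k\<in>{1..N}. pmf (P j) (t j k)) * (\<Prod>m\<in>{1..n}. pmf (P i) (x m))"

definition err_prob :: "nat \<Rightarrow> nat \<Rightarrow> nat \<Rightarrow> (nat \<Rightarrow> 'a pmf) \<Rightarrow> (nat \<Rightarrow> real)
    \<Rightarrow> ((nat \<Rightarrow> nat \<Rightarrow> 'a) \<Rightarrow> (nat \<Rightarrow> 'a) \<Rightarrow> nat) \<Rightarrow> real" where
  "err_prob M N n P \<pi> dec =
     (\<Sum>i\<in>{1..M}. \<pi> i * (\<Sum>t\<in>train_space M N. \<Sum>x\<in>test_space n.
         (if dec t x \<noteq> i then joint_prob M N n P i t x else 0)))"

end

theory Submission
  imports Defs
begin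

lemma card_filter_sum:
  assumes "finite I"
  shows "real (card {m\<in>I. Q m}) = (\<Sum>m\<in>I. if Q m then 1 else 0)"
proof -
  have "real (card {m\<in>I. Q m}) = (\<Sum>m\<in>{m\<in>I. Q m}. 1)" by simp
  also have "\<dots> = (\<Sum>m\<in>I. if Q m then 1 else 0)"
    using assms by (simp add: sum.inter_filter[symmetric])
  finally show ?thesis .
qed

lemma pmf_prod_sum_one:
  fixes p :: "'b \<Rightarrow> 'a::finite pmf"
  assumes "finite I"
  shows "(\<Sum>x\<in>PiE I (\<lambda>_. UNIV). \<Prod>m\<in>I. pmf (p m) (x m)) = 1"
proof -
  have "(\<Sum>x\<in>PiE I (\<lambda>_. UNIV). \<Prod>m\<in>I. pmf (p m) (x m)) = (\<Prod>m\<in>I. \<Sum>y\<in>UNIV. pmf (p m) y)"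
    using assms by (subst prod_sum_PiE) auto
  also have "\<dots> = 1" by (simp add: sum_pmf_eq_1)
  finally show ?thesis .
qed


lemma chernoff_ge:
  fixes p :: "'a::finite pmf"
  assumes "n \<ge> 1" "\<epsilon> \<ge> 0"
  shows "(\<Sum>x\<in>PiE {1..n} (\<lambda>_. UNIV). (\<Prod>m\<in>{1..n}. pmf p (x m)) *
           (if real (card {m\<in>{1..n}. x m \<in> S}) \<ge> real n * ((\<Sum>a\<in>S. pmf p a) + \<epsilon>) then 1 else 0))
         \<le> exp (-2 * real n * \<epsilon>\<^sup>2)"
proof -
  define q where "q = (\<Sum>a\<in>S. pmf p a)"
  define l where "l = 4 * \<epsilon>"
  have l0: "l \<ge> 0" using assms by (simp add: l_def)
  have q0: "q \<ge> 0" unfolding q_def by (simp add: sum_nonneg)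
  have el: "exp l \<ge> 1" using l0 by simp
  define c where "c = (\<lambda>x::nat\<Rightarrow>'a. (\<Sum>m\<in>{1..n}. if x m \<in> S then 1 else 0::real))"
  have ind: "(if real (card {m\<in>{1..n}. x m \<in> S}) \<ge> real n * (q + \<epsilon>) then 1 else 0)
      \<le> exp (- l * real n * (q + \<epsilon>)) * (\<Prod>m\<in>{1..n}. exp (l * (if x m \<in> S then 1 else 0)))" for x
  proof -
    have "(\<Prod>m\<in>{1..n}. exp (l * (if x m \<in> S then 1 else 0))) = exp (l * c x)"
      unfolding c_def by (simp add: exp_sum sum_distrib_left)
    moreover have "real (card {m\<in>{1..n}. x m \<in> S}) = c x"
      unfolding c_def by (rule card_filter_sum) simp
    moreover have "exp (- l * real n * (q + \<epsilon>)) * exp (l * c x) = exp (l * (c x - real n * (q + \<epsilon>)))"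
      by (simp add: mult_exp_exp algebra_simps)
    moreover have "c x \<ge> real n * (q + \<epsilon>) \<Longrightarrow> 1 \<le> exp (l * (c x - real n * (q + \<epsilon>)))"
      using l0 by simp
    ultimately show ?thesis by auto
  qed
  have "(\<Sum>x\<in>PiE {1..n} (\<lambda>_. UNIV). (\<Prod>m\<in>{1..n}. pmf p (x m)) *
           (if real (card {m\<in>{1..n}. x m \<in> S}) \<ge> real n * (q + \<epsilon>) then 1 else 0))
     \<le> (\<Sum>x\<in>PiE {1..n} (\<lambda>_. UNIV). (\<Prod>m\<in>{1..n}. pmf p (x m)) *
           (exp (- l * real n * (q + \<epsilon>)) * (\<Prod>m\<in>{1..n}. exp (l * (if x m \<in> S then 1 else 0)))))"
    by (intro sum_mono mult_left_mono ind prod_nonneg) auto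
  also have "\<dots> = exp (- l * real n * (q + \<epsilon>)) *
       (\<Sum>x\<in>PiE {1..n} (\<lambda>_. UNIV). \<Prod>m\<in>{1..n}. pmf p (x m) * exp (l * (if x m \<in> S then 1 else 0)))"
    by (simp add: sum_distrib_left prod.distrib mult_ac)
  also have "(\<Sum>x\<in>PiE {1..n} (\<lambda>_. UNIV). \<Prod>m\<in>{1..n}. pmf p (x m) * exp (l * (if x m \<in> S then 1 else 0)))
      = (\<Prod>m\<in>{1..n}. \<Sum>y\<in>UNIV. pmf p y * exp (l * (if y \<in> S then 1 else 0)))"
    by (subst prod_sum_PiE) auto
  also have "(\<Sum>y\<in>UNIV. pmf p y * exp (l * (if y \<in> S then 1 else 0))) = 1 + q * (exp l - 1)"
  proof -
    have "(\<Sum>y\<in>UNIV. pmf p y * exp (l * (if y \<in> S then 1 else 0)))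
        = (\<Sum>y\<in>UNIV. pmf p y + (if y \<in> S then pmf p y * (exp l - 1) else 0))"
      by (intro sum.cong) (auto simp: algebra_simps)
    also have "\<dots> = 1 + (\<Sum>y\<in>S. pmf p y * (exp l - 1))"
      by (simp add: sum.distrib sum_pmf_eq_1 sum.If_cases)
    finally show ?thesis by (simp add: q_def sum_distrib_right)
  qed
  also have "(\<Prod>m\<in>{1..n}. 1 + q * (exp l - 1)) = (1 + q * (exp l - 1)) ^ n" by simp
  also have "(1 + q * (exp l - 1)) ^ n \<le> exp (real n * (l * q + l\<^sup>2 / 8))"
  proof -
    have pos: "1 + q * (exp l - 1) > 0" using q0 l0
      by (smt (verit) el mult_nonneg_nonneg)
    have "-l * q + ln (1 + q * (exp l - 1)) \<le> l\<^sup>2 / 8"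
      using Hoeffdings_lemma_aux[OF l0 q0] by simp
    hence "ln (1 + q * (exp l - 1)) \<le> l * q + l\<^sup>2 / 8" by simp
    hence b: "1 + q * (exp l - 1) \<le> exp (l * q + l\<^sup>2 / 8)" using pos by (metis exp_le_cancel_iff exp_ln)
    have "(1 + q * (exp l - 1)) ^ n \<le> exp (l * q + l\<^sup>2 / 8) ^ n"
      using pos b by (intro power_mono) auto
    also have "exp (l * q + l\<^sup>2 / 8) ^ n = exp (real n * (l * q + l\<^sup>2 / 8))"
      by (simp add: exp_of_nat_mult)
    finally show ?thesis .
  qed
  hence "exp (- l * real n * (q + \<epsilon>)) * (1 + q * (exp l - 1)) ^ n
       \<le> exp (- l * real n * (q + \<epsilon>)) * exp (real n * (l * q + l\<^sup>2 / 8))"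
    by (intro mult_left_mono) auto
  also have "\<dots> = exp (-2 * real n * \<epsilon>\<^sup>2)"
    by (simp add: mult_exp_exp l_def power2_eq_square algebra_simps)
  finally show ?thesis unfolding q_def by simp
qed


lemma chernoff_le:
  fixes p :: "'a::finite pmf"
  assumes "n \<ge> 1" "\<epsilon> \<ge> 0"
  shows "(\<Sum>x\<in>PiE {1..n} (\<lambda>_. UNIV). (\<Prod>m\<in>{1..n}. pmf p (x m)) *
           (if real (card {m\<in>{1..n}. x m \<in> S}) \<le> real n * ((\<Sum>a\<in>S. pmf p a) - \<epsilon>) then 1 else 0))
         \<le> exp (-2 * real n * \<epsilon>\<^sup>2)"
proof -
  have cS: "(\<Sum>a\<in>-S. pmf p a) = 1 - (\<Sum>a\<in>S. pmf p a)"
  proof -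
    have "(\<Sum>a\<in>UNIV - S. pmf p a) = (\<Sum>a\<in>UNIV. pmf p a) - (\<Sum>a\<in>S. pmf p a)"
      by (rule sum_diff) auto
    thus ?thesis by (simp add: sum_pmf_eq_1 Compl_eq_Diff_UNIV)
  qed
  have cc: "real (card {m\<in>{1..n}. x m \<in> -S}) = real n - real (card {m\<in>{1..n}. x m \<in> S})" for x :: "nat \<Rightarrow> 'a"
  proof -
    have "real (card {m\<in>{1..n}. x m \<in> -S}) + real (card {m\<in>{1..n}. x m \<in> S})
        = (\<Sum>m\<in>{1..n}. (if x m \<in> -S then 1 else 0) + (if x m \<in> S then 1 else 0))"
      by (simp only: card_filter_sum[OF finite_atLeastAtMost] sum.distrib)
    also have "\<dots> = (\<Sum>m\<in>{1..n}. 1)" by (intro sum.cong) auto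
    finally show ?thesis by simp
  qed
  have "(\<Sum>x\<in>PiE {1..n} (\<lambda>_. UNIV). (\<Prod>m\<in>{1..n}. pmf p (x m)) *
           (if real (card {m\<in>{1..n}. x m \<in> S}) \<le> real n * ((\<Sum>a\<in>S. pmf p a) - \<epsilon>) then 1 else 0))
      = (\<Sum>x\<in>PiE {1..n} (\<lambda>_. UNIV). (\<Prod>m\<in>{1..n}. pmf p (x m)) *
           (if real (card {m\<in>{1..n}. x m \<in> -S}) \<ge> real n * ((\<Sum>a\<in>-S. pmf p a) + \<epsilon>) then 1 else 0))"
  proof (intro sum.cong refl arg_cong2[where f="(*)"])
    fix x :: "nat \<Rightarrow> 'a"
    have "(real (card {m\<in>{1..n}. x m \<in> S}) \<le> real n * ((\<Sum>a\<in>S. pmf p a) - \<epsilon>)) =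
          (real (card {m\<in>{1..n}. x m \<in> -S}) \<ge> real n * ((\<Sum>a\<in>-S. pmf p a) + \<epsilon>))"
      unfolding cc cS by (simp add: algebra_simps)
    thus "(if real (card {m\<in>{1..n}. x m \<in> S}) \<le> real n * ((\<Sum>a\<in>S. pmf p a) - \<epsilon>) then 1 else 0) =
          (if real (card {m\<in>{1..n}. x m \<in> -S}) \<ge> real n * ((\<Sum>a\<in>-S. pmf p a) + \<epsilon>) then 1 else (0::real))"
      by simp
  qed
  also have "\<dots> \<le> exp (-2 * real n * \<epsilon>\<^sup>2)" by (rule chernoff_ge[OF assms])
  finally show ?thesis .
qed

lemma chernoff:
  fixes p :: "'a::finite pmf"
  assumes "n \<ge> 1" "\<epsilon> \<ge> 0"
  shows "(\<Sum>x\<in>PiE {1..n} (\<lambda>_. UNIV). (\<Prod>m\<in>{1..n}. pmf p (x m)) *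
           (if \<epsilon> \<le> \<bar>real (card {m\<in>{1..n}. x m \<in> S}) / real n - (\<Sum>a\<in>S. pmf p a)\<bar> then 1 else 0))
         \<le> 2 * exp (-2 * real n * \<epsilon>\<^sup>2)"
proof -
  let ?q = "\<Sum>a\<in>S. pmf p a"
  have np: "real n > 0" using assms by simp
  have ind: "(if \<epsilon> \<le> \<bar>c / real n - ?q\<bar> then 1 else 0)
     \<le> (if c \<ge> real n * (?q + \<epsilon>) then 1 else 0) + (if c \<le> real n * (?q - \<epsilon>) then 1 else (0::real))" for c
  proof -
    have "\<epsilon> \<le> \<bar>c / real n - ?q\<bar> \<Longrightarrow> c \<ge> real n * (?q + \<epsilon>) \<or> c \<le> real n * (?q - \<epsilon>)"
    proof -
      assume a: "\<epsilon> \<le> \<bar>c / real n - ?q\<bar>"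
      have "c / real n \<ge> ?q + \<epsilon> \<or> c / real n \<le> ?q - \<epsilon>" using a by linarith
      thus ?thesis using np by (simp add: pos_le_divide_eq pos_divide_le_eq mult.commute)
    qed
    thus ?thesis by auto
  qed
  have "(\<Sum>x\<in>PiE {1..n} (\<lambda>_. UNIV). (\<Prod>m\<in>{1..n}. pmf p (x m)) *
           (if \<epsilon> \<le> \<bar>real (card {m\<in>{1..n}. x m \<in> S}) / real n - ?q\<bar> then 1 else 0))
     \<le> (\<Sum>x\<in>PiE {1..n} (\<lambda>_. UNIV). (\<Prod>m\<in>{1..n}. pmf p (x m)) *
           (if real (card {m\<in>{1..n}. x m \<in> S}) \<ge> real n * (?q + \<epsilon>) then 1 else 0)
         + (\<Prod>m\<in>{1..n}. pmf p (x m)) *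
           (if real (card {m\<in>{1..n}. x m \<in> S}) \<le> real n * (?q - \<epsilon>) then 1 else 0))"
    by (intro sum_mono, subst distrib_left[symmetric], intro mult_left_mono ind prod_nonneg) auto
  also have "\<dots> \<le> exp (-2 * real n * \<epsilon>\<^sup>2) + exp (-2 * real n * \<epsilon>\<^sup>2)"
    unfolding sum.distrib by (intro add_mono chernoff_ge chernoff_le assms)
  finally show ?thesis by simp
qed

lemma marginal:
  fixes h :: "'i \<Rightarrow> 'u \<Rightarrow> real"
  assumes "finite I" "k0 \<in> I" "\<And>j. j \<in> I \<Longrightarrow> finite (B j)"
    and "\<And>j. j \<in> I \<Longrightarrow> (\<Sum>u\<in>B j. h j u) = 1"
  shows "(\<Sum>t\<in>PiE I B. (\<Prod>j\<in>I. h j (t j)) * g (t k0)) = (\<Sum>u\<in>B k0. h k0 u * g u)"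
proof -
  define f where "f = (\<lambda>j u. if j = k0 then h j u * g u else h j u)"
  have "(\<Sum>t\<in>PiE I B. (\<Prod>j\<in>I. h j (t j)) * g (t k0)) = (\<Sum>t\<in>PiE I B. \<Prod>j\<in>I. f j (t j))"
  proof (intro sum.cong refl)
    fix t
    have "(\<Prod>j\<in>I. f j (t j)) = f k0 (t k0) * (\<Prod>j\<in>I-{k0}. f j (t j))"
      using assms by (simp add: prod.remove)
    also have "(\<Prod>j\<in>I-{k0}. f j (t j)) = (\<Prod>j\<in>I-{k0}. h j (t j))"
      by (intro prod.cong) (auto simp: f_def)
    also have "(\<Prod>j\<in>I. h j (t j)) = h k0 (t k0) * (\<Prod>j\<in>I-{k0}. h j (t j))"
      using assms by (simp add: prod.remove)
    ultimately show "(\<Prod>j\<in>I. h j (t j)) * g (t k0) = (\<Prod>j\<in>I. f j (t j))"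
      by (simp add: f_def)
  qed
  also have "\<dots> = (\<Prod>j\<in>I. \<Sum>u\<in>B j. f j u)"
    using assms by (subst prod_sum_PiE) auto
  also have "\<dots> = (\<Sum>u\<in>B k0. f k0 u) * (\<Prod>j\<in>I-{k0}. \<Sum>u\<in>B j. f j u)"
    using assms by (simp add: prod.remove)
  also have "(\<Prod>j\<in>I-{k0}. \<Sum>u\<in>B j. f j u) = 1"
    using assms by (intro prod.neutral) (auto simp: f_def)
  finally show ?thesis by (simp add: f_def)
qed


lemma sum_split_compl:
  fixes f :: "'a::finite \<Rightarrow> real"
  shows "(\<Sum>a\<in>UNIV. f a) = (\<Sum>a\<in>B. f a) + (\<Sum>a\<in>-B. f a)"
proof -
  have "(\<Sum>a\<in>B \<union> -B. f a) = (\<Sum>a\<in>B. f a) + (\<Sum>a\<in>-B. f a)"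
    by (rule sum.union_disjoint) auto
  thus ?thesis by simp
qed

lemma half_bound:
  fixes f g :: "'a::finite \<Rightarrow> real"
  assumes "(\<Sum>a\<in>UNIV. f a) = (\<Sum>a\<in>UNIV. g a)"
  shows "\<bar>\<Sum>a\<in>B. f a - g a\<bar> \<le> (\<Sum>a\<in>UNIV. \<bar>f a - g a\<bar>) / 2"
proof -
  have z: "(\<Sum>a\<in>UNIV. f a - g a) = 0" using assms by (simp add: sum_subtractf)
  have s1: "(\<Sum>a\<in>B. f a - g a) + (\<Sum>a\<in>-B. f a - g a) = 0"
    using z sum_split_compl[of "\<lambda>a. f a - g a" B] by simp
  have s2: "(\<Sum>a\<in>UNIV. \<bar>f a - g a\<bar>) = (\<Sum>a\<in>B. \<bar>f a - g a\<bar>) + (\<Sum>a\<in>-B. \<bar>f a - g a\<bar>)"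
    by (rule sum_split_compl)
  have "\<bar>\<Sum>a\<in>B. f a - g a\<bar> \<le> (\<Sum>a\<in>B. \<bar>f a - g a\<bar>)" by (rule sum_abs)
  moreover have "\<bar>\<Sum>a\<in>-B. f a - g a\<bar> \<le> (\<Sum>a\<in>-B. \<bar>f a - g a\<bar>)" by (rule sum_abs)
  ultimately show ?thesis using s1 s2 by linarith
qed

lemma scheffe_max:
  fixes h :: "'a::finite \<Rightarrow> real"
  shows "(\<Sum>a\<in>B. h a) \<le> (\<Sum>a\<in>{a. 0 \<le> h a}. h a)"
proof -
  have "(\<Sum>a\<in>B. h a) \<le> (\<Sum>a\<in>B. max (h a) 0)" by (intro sum_mono) auto
  also have "\<dots> \<le> (\<Sum>a\<in>UNIV. max (h a) 0)" by (intro sum_mono2) auto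
  also have "\<dots> = (\<Sum>a\<in>UNIV. if 0 \<le> h a then h a else 0)" by (intro sum.cong) auto
  also have "\<dots> = (\<Sum>a\<in>{a\<in>UNIV. 0 \<le> h a}. h a)" using sum.inter_filter[of UNIV h "\<lambda>a. 0 \<le> h a"] by simp
  finally show ?thesis by simp
qed

lemma tv_eq:
  fixes p q :: "'a::finite pmf"
  shows "tv_dist p q = (\<Sum>a\<in>{a. 0 \<le> pmf p a - pmf q a}. pmf p a - pmf q a)"
proof -
  define h where "h = (\<lambda>a. pmf p a - pmf q a)"
  define A where "A = {a. 0 \<le> h a}"
  have z: "(\<Sum>a\<in>UNIV. h a) = 0" by (simp add: h_def sum_subtractf sum_pmf_eq_1)
  have s1: "(\<Sum>a\<in>A. h a) + (\<Sum>a\<in>-A. h a) = 0"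
    using z sum_split_compl[of h A] by simp
  have s2: "(\<Sum>a\<in>UNIV. \<bar>h a\<bar>) = (\<Sum>a\<in>A. \<bar>h a\<bar>) + (\<Sum>a\<in>-A. \<bar>h a\<bar>)"
    by (rule sum_split_compl)
  have "(\<Sum>a\<in>A. \<bar>h a\<bar>) = (\<Sum>a\<in>A. h a)" by (intro sum.cong) (auto simp: A_def)
  moreover have "(\<Sum>a\<in>-A. \<bar>h a\<bar>) = - (\<Sum>a\<in>-A. h a)"
    by (subst sum_negf[symmetric], intro sum.cong) (auto simp: A_def)
  ultimately have "(\<Sum>a\<in>UNIV. \<bar>h a\<bar>) = 2 * (\<Sum>a\<in>A. h a)" using s1 s2 by linarith
  thus ?thesis unfolding tv_dist_def by (simp add: h_def A_def)
qed

lemma emp_sum: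
  fixes t :: "nat \<Rightarrow> nat \<Rightarrow> 'a::finite"
  assumes "N \<ge> 1"
  shows "(\<Sum>a\<in>UNIV. emp N t k a) = 1"
proof -
  have "(\<Sum>a\<in>UNIV. real (card {k'\<in>{1..N}. t k k' = a}))
      = (\<Sum>a\<in>UNIV. \<Sum>k'\<in>{1..N}. if t k k' = a then 1 else 0)"
    by (intro sum.cong refl card_filter_sum) simp
  also have "\<dots> = (\<Sum>k'\<in>{1..N}. \<Sum>a\<in>UNIV. if t k k' = a then 1 else 0)"
    by (rule sum.swap)
  also have "\<dots> = (\<Sum>k'\<in>{1..N}. (1::real))"
  proof (intro sum.cong refl)
    fix k' show "(\<Sum>a\<in>UNIV. if t k k' = a then 1 else 0) = (1::real)"
      using sum.delta'[of UNIV "t k k'" "\<lambda>_. 1::real"] by simp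
  qed
  also have "\<dots> = real N" by simp
  finally show ?thesis using assms unfolding emp_def by (simp add: sum_divide_distrib[symmetric])
qed


lemma finite_family: "finite (scheffe_family M N t)"
proof -
  have "scheffe_family M N t \<subseteq> (\<lambda>(k,l). scheffe N t k l) ` ({1..M} \<times> {1..M})"
    unfolding scheffe_family_def by force
  thus ?thesis by (rule finite_subset) simp
qed

lemma card_family: "card (scheffe_family M N t) \<le> (M - 1) * (M - 1)"
proof -
  have "scheffe_family M N t \<subseteq> (\<lambda>(k,l). scheffe N t k l) ` ({1..M-1} \<times> {2..M})"
    unfolding scheffe_family_def by force
  hence "card (scheffe_family M N t) \<le> card ((\<lambda>(k,l). scheffe N t k l) ` ({1..M-1} \<times> {2..M}))"
    by (intro card_mono) auto
  also have "\<dots> \<le> card ({1..M-1} \<times> {2..M})" by (rule card_image_le) simp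
  also have "\<dots> = (M - 1) * (M - 1)" by (simp add: card_cartesian_product)
  finally show ?thesis .
qed

lemma det:
  fixes P :: "nat \<Rightarrow> 'a::finite pmf" and t :: "nat \<Rightarrow> nat \<Rightarrow> 'a"
  assumes M2: "M \<ge> 2" and N1: "N \<ge> 1" and i: "i \<in> {1..M}" and j: "j \<in> {1..M}" and ij: "i \<noteq> j"
    and sc: "dgl_score M N n t x j \<le> dgl_score M N n t x i"
    and gt: "\<forall>k\<in>{1..M}. \<forall>a. \<bar>emp N t k a - pmf (P k) a\<bar> < s1"
    and gx: "\<forall>A\<in>scheffe_family M N t. \<bar>mu_n n x A - (\<Sum>a\<in>A. pmf (P i) a)\<bar> < s2"
    and D: "\<forall>k\<in>{1..M}. \<forall>l\<in>{1..M}. k \<noteq> l \<longrightarrow> D \<le> tv_dist (P k) (P l)"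
  shows "D < 2 * real (card (UNIV::'a set)) * s1 + 2 * s2"
proof -
  define K where "K = real (card (UNIV::'a set))"
  have finF: "finite (scheffe_family M N t)" by (rule finite_family)
  have dev: "\<bar>emp_set N t k B - (\<Sum>a\<in>B. pmf (P k) a)\<bar> < K * s1 / 2" if k: "k \<in> {1..M}" for k B
  proof -
    have "\<bar>emp_set N t k B - (\<Sum>a\<in>B. pmf (P k) a)\<bar> = \<bar>\<Sum>a\<in>B. emp N t k a - pmf (P k) a\<bar>"
      by (simp add: emp_set_def sum_subtractf)
    also have "\<dots> \<le> (\<Sum>a\<in>UNIV. \<bar>emp N t k a - pmf (P k) a\<bar>) / 2"
      by (rule half_bound) (simp add: emp_sum[OF N1] sum_pmf_eq_1)
    finally have h1: "\<bar>emp_set N t k B - (\<Sum>a\<in>B. pmf (P k) a)\<bar> \<le> (\<Sum>a\<in>UNIV. \<bar>emp N t k a - pmf (P k) a\<bar>) / 2" .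
    have h2: "(\<Sum>a\<in>UNIV. \<bar>emp N t k a - pmf (P k) a\<bar>) < (\<Sum>a\<in>(UNIV::'a set). s1)"
    proof (rule sum_strict_mono_ex1)
      show "\<forall>a\<in>UNIV. \<bar>emp N t k a - pmf (P k) a\<bar> \<le> s1" using gt k by (auto simp: less_imp_le)
      show "\<exists>a\<in>UNIV. \<bar>emp N t k a - pmf (P k) a\<bar> < s1" using gt k by blast
    qed simp
    show ?thesis using h1 h2 by (simp add: K_def)
  qed
  define k where "k = min i j"
  define l where "l = max i j"
  have kl: "k < l" "k \<in> {1..M}" "l \<in> {1..M}" using i j ij by (auto simp: k_def l_def)
  define A where "A = scheffe N t k l"
  have AF: "A \<in> scheffe_family M N t" unfolding A_def scheffe_family_def using kl by auto
  have Fne: "scheffe_family M N t \<noteq> {}" using AF by auto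
  have score_ge: "\<bar>emp_set N t r A - mu_n n x A\<bar> \<le> dgl_score M N n t x r" for r
    unfolding dgl_score_def using finF AF by (intro Max_ge) auto
  have score_i: "dgl_score M N n t x i < K * s1 / 2 + s2"
    unfolding dgl_score_def
  proof (subst Max_less_iff)
    show "finite ((\<lambda>A. \<bar>emp_set N t i A - mu_n n x A\<bar>) ` scheffe_family M N t)" using finF by simp
    show "(\<lambda>A. \<bar>emp_set N t i A - mu_n n x A\<bar>) ` scheffe_family M N t \<noteq> {}" using Fne by simp
    show "\<forall>a\<in>(\<lambda>A. \<bar>emp_set N t i A - mu_n n x A\<bar>) ` scheffe_family M N t. a < K * s1 / 2 + s2"
    proof
      fix a assume "a \<in> (\<lambda>A. \<bar>emp_set N t i A - mu_n n x A\<bar>) ` scheffe_family M N t"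
      then obtain B where B: "B \<in> scheffe_family M N t" and a: "a = \<bar>emp_set N t i B - mu_n n x B\<bar>" by auto
      have "\<bar>emp_set N t i B - (\<Sum>a\<in>B. pmf (P i) a)\<bar> < K * s1 / 2" using dev i by blast
      moreover have "\<bar>mu_n n x B - (\<Sum>a\<in>B. pmf (P i) a)\<bar> < s2" using gx B by blast
      ultimately show "a < K * s1 / 2 + s2" unfolding a by linarith
    qed
  qed
  define Bs where "Bs = {a. 0 \<le> pmf (P k) a - pmf (P l) a}"
  have X1: "emp_set N t k A - emp_set N t l A \<ge> (\<Sum>a\<in>Bs. emp N t k a - emp N t l a)"
  proof -
    have "A = {a. 0 \<le> emp N t k a - emp N t l a}" by (auto simp: A_def scheffe_def)
    hence "emp_set N t k A - emp_set N t l A = (\<Sum>a\<in>{a. 0 \<le> emp N t k a - emp N t l a}. emp N t k a - emp N t l a)"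
      by (simp add: emp_set_def sum_subtractf)
    thus ?thesis using scheffe_max[where B=Bs and h="\<lambda>a. emp N t k a - emp N t l a"] by simp
  qed
  have X2: "(\<Sum>a\<in>Bs. emp N t k a - emp N t l a) = tv_dist (P k) (P l)
      + (emp_set N t k Bs - (\<Sum>a\<in>Bs. pmf (P k) a)) - (emp_set N t l Bs - (\<Sum>a\<in>Bs. pmf (P l) a))"
  proof -
    have tvk: "tv_dist (P k) (P l) = (\<Sum>a\<in>Bs. pmf (P k) a - pmf (P l) a)"
      unfolding Bs_def by (rule tv_eq)
    show ?thesis unfolding tvk emp_set_def sum_subtractf by simp
  qed
  have X4: "D \<le> tv_dist (P k) (P l)" using D kl by auto
  have low: "emp_set N t k A - emp_set N t l A > D - K * s1"
    using X1 X2 X4 dev[OF kl(2), of Bs] dev[OF kl(3), of Bs] by linarith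
  have "emp_set N t k A - emp_set N t l A \<le> \<bar>emp_set N t i A - mu_n n x A\<bar> + \<bar>emp_set N t j A - mu_n n x A\<bar>"
    unfolding k_def l_def by (cases "i < j") (auto simp: min_def max_def)
  also have "\<dots> \<le> dgl_score M N n t x i + dgl_score M N n t x j" by (intro add_mono score_ge)
  finally show ?thesis using low sc score_i unfolding K_def by linarith
qed


lemma train_sum_one:
  fixes P :: "nat \<Rightarrow> 'a::finite pmf"
  assumes "M \<ge> 1"
  shows "(\<Sum>t\<in>train_space M N. \<Prod>j\<in>{1..M}. \<Prod>k\<in>{1..N}. pmf (P j) (t j k)) = 1"
proof -
  have "(\<Sum>t\<in>train_space M N. \<Prod>j\<in>{1..M}. \<Prod>k\<in>{1..N}. pmf (P j) (t j k))
      = (\<Sum>t\<in>PiE {1..M} (\<lambda>_. PiE {1..N} (\<lambda>_. UNIV)). (\<Prod>j\<in>{1..M}. \<Prod>k\<in>{1..N}. pmf (P j) (t j k)) * (\<lambda>_. 1) (t 1))"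
    by (simp add: train_space_def)
  also have "\<dots> = (\<Sum>u\<in>PiE {1..N} (\<lambda>_. UNIV). (\<Prod>k\<in>{1..N}. pmf (P 1) (u k)) * 1)"
    using assms by (intro marginal) (auto intro: pmf_prod_sum_one[of _ "\<lambda>_. P _", simplified] simp: finite_PiE)
  also have "\<dots> = 1" using pmf_prod_sum_one[of "{1..N}" "\<lambda>_. P 1"] by simp
  finally show ?thesis .
qed


lemma train_part:
  fixes P :: "nat \<Rightarrow> 'a::finite pmf"
  assumes N1: "N \<ge> 1" and s1: "s1 \<ge> 0"
  shows "(\<Sum>t\<in>train_space M N. (\<Prod>j\<in>{1..M}. \<Prod>k\<in>{1..N}. pmf (P j) (t j k)) *
           (if \<forall>k\<in>{1..M}. \<forall>a. \<bar>emp N t k a - pmf (P k) a\<bar> < s1 then 0 else 1))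
       \<le> real M * real (card (UNIV::'a set)) * (2 * exp (-2 * real N * s1\<^sup>2))"
proof -
  define w where "w = (\<lambda>t::nat\<Rightarrow>nat\<Rightarrow>'a. \<Prod>j\<in>{1..M}. \<Prod>k\<in>{1..N}. pmf (P j) (t j k))"
  define ind where "ind = (\<lambda>t k a. if s1 \<le> \<bar>emp N t k a - pmf (P k) a\<bar> then 1 else (0::real))"
  have w0: "w t \<ge> 0" for t unfolding w_def by (intro prod_nonneg) auto
  have pt: "(if \<forall>k\<in>{1..M}. \<forall>a. \<bar>emp N t k a - pmf (P k) a\<bar> < s1 then 0 else 1)
       \<le> (\<Sum>k\<in>{1..M}. \<Sum>a\<in>UNIV. ind t k a)" for t
  proof (cases "\<forall>k\<in>{1..M}. \<forall>a. \<bar>emp N t k a - pmf (P k) a\<bar> < s1")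
    case True thus ?thesis by (simp add: ind_def sum_nonneg)
  next
    case False
    then obtain k a where ka: "k \<in> {1..M}" "s1 \<le> \<bar>emp N t k a - pmf (P k) a\<bar>" by (auto simp: not_less)
    have "1 = ind t k a" using ka by (simp add: ind_def)
    also have "\<dots> \<le> (\<Sum>a\<in>UNIV. ind t k a)"
      by (rule member_le_sum) (auto simp: ind_def)
    also have "\<dots> \<le> (\<Sum>k\<in>{1..M}. \<Sum>a\<in>UNIV. ind t k a)"
      using ka by (intro member_le_sum sum_nonneg) (auto simp: ind_def)
    finally show ?thesis using False by simp
  qed
  have mk: "(\<Sum>t\<in>train_space M N. w t * ind t k a) \<le> 2 * exp (-2 * real N * s1\<^sup>2)"
    if k: "k \<in> {1..M}" for k a
  proof -
    define g where "g = (\<lambda>u::nat\<Rightarrow>'a. if s1 \<le> \<bar>real (card {m\<in>{1..N}. u m \<in> {a}}) / real N - (\<Sum>b\<in>{a}. pmf (P k) b)\<bar> then 1 else (0::real))"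
    have "(\<Sum>t\<in>train_space M N. w t * ind t k a)
        = (\<Sum>t\<in>PiE {1..M} (\<lambda>_. PiE {1..N} (\<lambda>_. UNIV)). (\<Prod>j\<in>{1..M}. \<Prod>k\<in>{1..N}. pmf (P j) (t j k)) * g (t k))"
      unfolding train_space_def w_def ind_def g_def emp_def by simp
    also have "\<dots> = (\<Sum>u\<in>PiE {1..N} (\<lambda>_. UNIV). (\<Prod>k'\<in>{1..N}. pmf (P k) (u k')) * g u)"
      using k by (intro marginal) (auto intro: pmf_prod_sum_one[of _ "\<lambda>_. P _", simplified] simp: finite_PiE)
    also have "\<dots> \<le> 2 * exp (-2 * real N * s1\<^sup>2)"
      unfolding g_def by (rule chernoff[OF N1 s1])
    finally show ?thesis .
  qed
  have "(\<Sum>t\<in>train_space M N. w t * (if \<forall>k\<in>{1..M}. \<forall>a. \<bar>emp N t k a - pmf (P k) a\<bar> < s1 then 0 else 1))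
      \<le> (\<Sum>t\<in>train_space M N. w t * (\<Sum>k\<in>{1..M}. \<Sum>a\<in>UNIV. ind t k a))"
    by (intro sum_mono mult_left_mono pt w0)
  also have "\<dots> = (\<Sum>k\<in>{1..M}. \<Sum>a\<in>UNIV. \<Sum>t\<in>train_space M N. w t * ind t k a)"
    by (simp add: sum_distrib_left sum.swap[of _ "train_space M N"])
  also have "\<dots> \<le> (\<Sum>k\<in>{1..M}. \<Sum>a\<in>(UNIV::'a set). 2 * exp (-2 * real N * s1\<^sup>2))"
    by (intro sum_mono mk) auto
  also have "\<dots> = real M * real (card (UNIV::'a set)) * (2 * exp (-2 * real N * s1\<^sup>2))" by simp
  finally show ?thesis unfolding w_def .
qed


lemma test_part:
  fixes P :: "nat \<Rightarrow> 'a::finite pmf" and t :: "nat \<Rightarrow> nat \<Rightarrow> 'a"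
  assumes n1: "n \<ge> 1" and s2: "s2 \<ge> 0"
  shows "(\<Sum>x\<in>test_space n. (\<Prod>m\<in>{1..n}. pmf (P i) (x m)) *
           (if \<forall>A\<in>scheffe_family M N t. \<bar>mu_n n x A - (\<Sum>a\<in>A. pmf (P i) a)\<bar> < s2 then 0 else 1))
       \<le> real ((M - 1) * (M - 1)) * (2 * exp (-2 * real n * s2\<^sup>2))"
proof -
  define F where "F = scheffe_family M N t"
  define v where "v = (\<lambda>x::nat\<Rightarrow>'a. \<Prod>m\<in>{1..n}. pmf (P i) (x m))"
  define ind where "ind = (\<lambda>x A. if s2 \<le> \<bar>mu_n n x A - (\<Sum>a\<in>A. pmf (P i) a)\<bar> then 1 else (0::real))"
  have finF: "finite F" unfolding F_def by (rule finite_family)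
  have v0: "v x \<ge> 0" for x unfolding v_def by (intro prod_nonneg) auto
  have pt: "(if \<forall>A\<in>F. \<bar>mu_n n x A - (\<Sum>a\<in>A. pmf (P i) a)\<bar> < s2 then 0 else 1) \<le> (\<Sum>A\<in>F. ind x A)" for x
  proof (cases "\<forall>A\<in>F. \<bar>mu_n n x A - (\<Sum>a\<in>A. pmf (P i) a)\<bar> < s2")
    case True thus ?thesis by (simp add: ind_def sum_nonneg)
  next
    case False
    then obtain A where A: "A \<in> F" "s2 \<le> \<bar>mu_n n x A - (\<Sum>a\<in>A. pmf (P i) a)\<bar>" by (auto simp: not_less)
    have "1 = ind x A" using A by (simp add: ind_def)
    also have "\<dots> \<le> (\<Sum>A\<in>F. ind x A)"
      using A finF by (intro member_le_sum) (auto simp: ind_def)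
    finally show ?thesis using False by simp
  qed
  have "(\<Sum>x\<in>test_space n. v x * (if \<forall>A\<in>F. \<bar>mu_n n x A - (\<Sum>a\<in>A. pmf (P i) a)\<bar> < s2 then 0 else 1))
      \<le> (\<Sum>x\<in>test_space n. v x * (\<Sum>A\<in>F. ind x A))"
    by (intro sum_mono mult_left_mono pt v0)
  also have "\<dots> = (\<Sum>A\<in>F. \<Sum>x\<in>test_space n. v x * ind x A)"
    by (simp add: sum_distrib_left sum.swap[of _ "test_space n"])
  also have "\<dots> \<le> (\<Sum>A\<in>F. 2 * exp (-2 * real n * s2\<^sup>2))"
  proof (intro sum_mono)
    fix A
    show "(\<Sum>x\<in>test_space n. v x * ind x A) \<le> 2 * exp (-2 * real n * s2\<^sup>2)"
      unfolding test_space_def v_def ind_def mu_n_def by (rule chernoff[OF n1 s2])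
  qed
  also have "\<dots> = real (card F) * (2 * exp (-2 * real n * s2\<^sup>2))" by simp
  also have "\<dots> \<le> real ((M - 1) * (M - 1)) * (2 * exp (-2 * real n * s2\<^sup>2))"
    unfolding F_def by (intro mult_right_mono) (use card_family[of M N t] in \<open>simp_all only: of_nat_le_iff\<close>, simp)
  finally show ?thesis unfolding v_def F_def .
qed


lemma per_i:
  fixes P :: "nat \<Rightarrow> 'a::finite pmf"
    and dec :: "(nat \<Rightarrow> nat \<Rightarrow> 'a) \<Rightarrow> (nat \<Rightarrow> 'a) \<Rightarrow> nat"
  assumes M2: "M \<ge> 2" and n1: "n \<ge> 1" and N1: "N \<ge> 1"
    and decok: "\<forall>t\<in>train_space M N. \<forall>x\<in>test_space n.
           dec t x \<in> {1..M} \<and> (\<forall>j\<in>{1..M}. dgl_score M N n t x (dec t x) \<le> dgl_score M N n t x j)"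
    and i: "i \<in> {1..M}"
    and Dp: "\<forall>k\<in>{1..M}. \<forall>l\<in>{1..M}. k \<noteq> l \<longrightarrow> D \<le> tv_dist (P k) (P l)"
    and s1: "s1 \<ge> 0" and s2: "s2 \<ge> 0"
    and Deq: "2 * real (card (UNIV::'a set)) * s1 + 2 * s2 \<le> D"
  shows "(\<Sum>t\<in>train_space M N. \<Sum>x\<in>test_space n. (if dec t x \<noteq> i then joint_prob M N n P i t x else 0))
    \<le> real M * real (card (UNIV::'a set)) * (2 * exp (-2 * real N * s1\<^sup>2))
       + real ((M - 1) * (M - 1)) * (2 * exp (-2 * real n * s2\<^sup>2))"
proof -
  define w where "w = (\<lambda>t::nat\<Rightarrow>nat\<Rightarrow>'a. \<Prod>j\<in>{1..M}. \<Prod>k\<in>{1..N}. pmf (P j) (t j k))"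
  define v where "v = (\<lambda>x::nat\<Rightarrow>'a. \<Prod>m\<in>{1..n}. pmf (P i) (x m))"
  define bt where "bt = (\<lambda>t. if \<forall>k\<in>{1..M}. \<forall>a. \<bar>emp N t k a - pmf (P k) a\<bar> < s1 then 0 else (1::real))"
  define bx where "bx = (\<lambda>t x. if \<forall>A\<in>scheffe_family M N t. \<bar>mu_n n x A - (\<Sum>a\<in>A. pmf (P i) a)\<bar> < s2 then 0 else (1::real))"
  have w0: "w t \<ge> 0" for t unfolding w_def by (intro prod_nonneg) auto
  have v0: "v x \<ge> 0" for x unfolding v_def by (intro prod_nonneg) auto
  have vsum: "(\<Sum>x\<in>test_space n. v x) = 1"
    unfolding v_def test_space_def using pmf_prod_sum_one[of "{1..n}" "\<lambda>_. P i"] by simp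
  have wsum: "(\<Sum>t\<in>train_space M N. w t) = 1"
    unfolding w_def using train_sum_one[of M P N] M2 by simp
  have pt: "(if dec t x \<noteq> i then joint_prob M N n P i t x else 0)
      \<le> w t * bt t * v x + w t * (v x * bx t x)"
    if t: "t \<in> train_space M N" and x: "x \<in> test_space n" for t x
  proof (cases "dec t x \<noteq> i")
    case True
    have j: "dec t x \<in> {1..M}" and sc: "dgl_score M N n t x (dec t x) \<le> dgl_score M N n t x i"
      using decok t x i by auto
    have "bt t + bx t x \<ge> 1"
    proof (rule ccontr)
      assume "\<not> bt t + bx t x \<ge> 1"
      hence g1: "\<forall>k\<in>{1..M}. \<forall>a. \<bar>emp N t k a - pmf (P k) a\<bar> < s1"
        and g2: "\<forall>A\<in>scheffe_family M N t. \<bar>mu_n n x A - (\<Sum>a\<in>A. pmf (P i) a)\<bar> < s2"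
        unfolding bt_def bx_def by (auto split: if_splits)
      have "D < 2 * real (card (UNIV::'a set)) * s1 + 2 * s2"
        by (rule det[OF M2 N1 i j True[symmetric] sc g1 g2 Dp])
      thus False using Deq by linarith
    qed
    hence "w t * v x * 1 \<le> w t * v x * (bt t + bx t x)"
      using w0 v0 by (intro mult_left_mono) auto
    thus ?thesis using True by (simp add: joint_prob_def w_def v_def algebra_simps)
  next
    case False
    thus ?thesis using w0 v0 by (simp add: bt_def bx_def)
  qed
  have "(\<Sum>t\<in>train_space M N. \<Sum>x\<in>test_space n. (if dec t x \<noteq> i then joint_prob M N n P i t x else 0))
      \<le> (\<Sum>t\<in>train_space M N. \<Sum>x\<in>test_space n. w t * bt t * v x + w t * (v x * bx t x))"
    by (intro sum_mono pt)
  also have "\<dots> = (\<Sum>t\<in>train_space M N. w t * bt t * (\<Sum>x\<in>test_space n. v x))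
      + (\<Sum>t\<in>train_space M N. w t * (\<Sum>x\<in>test_space n. v x * bx t x))"
    by (simp add: sum.distrib sum_distrib_left)
  also have "\<dots> = (\<Sum>t\<in>train_space M N. w t * bt t)
      + (\<Sum>t\<in>train_space M N. w t * (\<Sum>x\<in>test_space n. v x * bx t x))"
    by (simp add: vsum)
  also have "(\<Sum>t\<in>train_space M N. w t * bt t) \<le> real M * real (card (UNIV::'a set)) * (2 * exp (-2 * real N * s1\<^sup>2))"
    unfolding w_def bt_def by (rule train_part[OF N1 s1])
  also have "(\<Sum>t\<in>train_space M N. w t * (\<Sum>x\<in>test_space n. v x * bx t x))
      \<le> (\<Sum>t\<in>train_space M N. w t * (real ((M - 1) * (M - 1)) * (2 * exp (-2 * real n * s2\<^sup>2))))"
    unfolding v_def bx_def by (intro sum_mono mult_left_mono test_part[OF n1 s2] w0)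
  also have "\<dots> = real ((M - 1) * (M - 1)) * (2 * exp (-2 * real n * s2\<^sup>2))"
    by (simp add: sum_distrib_right[symmetric] wsum)
  finally show ?thesis by simp
qed


lemma per_i_le1:
  fixes P :: "nat \<Rightarrow> 'a::finite pmf"
    and dec :: "(nat \<Rightarrow> nat \<Rightarrow> 'a) \<Rightarrow> (nat \<Rightarrow> 'a) \<Rightarrow> nat"
  assumes M1: "M \<ge> 1"
  shows "(\<Sum>t\<in>train_space M N. \<Sum>x\<in>test_space n. (if dec t x \<noteq> i then joint_prob M N n P i t x else 0)) \<le> 1"
proof -
  define w where "w = (\<lambda>t::nat\<Rightarrow>nat\<Rightarrow>'a. \<Prod>j\<in>{1..M}. \<Prod>k\<in>{1..N}. pmf (P j) (t j k))"
  define v where "v = (\<lambda>x::nat\<Rightarrow>'a. \<Prod>m\<in>{1..n}. pmf (P i) (x m))"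
  have w0: "w t \<ge> 0" for t unfolding w_def by (intro prod_nonneg) auto
  have v0: "v x \<ge> 0" for x unfolding v_def by (intro prod_nonneg) auto
  have vsum: "(\<Sum>x\<in>test_space n. v x) = 1"
    unfolding v_def test_space_def using pmf_prod_sum_one[of "{1..n}" "\<lambda>_. P i"] by simp
  have wsum: "(\<Sum>t\<in>train_space M N. w t) = 1"
    unfolding w_def using train_sum_one[of M P N] M1 by simp
  have "(\<Sum>t\<in>train_space M N. \<Sum>x\<in>test_space n. (if dec t x \<noteq> i then joint_prob M N n P i t x else 0))
     \<le> (\<Sum>t\<in>train_space M N. \<Sum>x\<in>test_space n. w t * v x)"
    using w0 v0 by (intro sum_mono) (auto simp: joint_prob_def w_def v_def)
  also have "\<dots> = 1" by (simp add: sum_distrib_left[symmetric] vsum wsum)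
  finally show ?thesis .
qed


lemma final_arith:
  fixes M K Q E Ei :: real
  assumes M2: "M \<ge> 2" and K1: "K \<ge> 1" and QK: "Q \<ge> K" and QM: "Q \<ge> (M - 1)\<^sup>2" and E0: "E \<ge> 0"
    and le1: "Ei \<le> 1" and le2: "Ei \<le> M * K * (2 * (E * E)) + (M - 1)\<^sup>2 * (2 * E)"
  shows "Ei \<le> 2 * M * Q * E"
proof (cases "2 * M * Q * E \<ge> 1")
  case True thus ?thesis using le1 by linarith
next
  case False
  have "M * K * E \<le> M * Q * E" using M2 QK E0 by (intro mult_right_mono mult_left_mono) auto
  hence mk: "2 * (M * K * E) \<le> 1" using False by linarith
  have "M * K * (2 * (E * E)) = (2 * (M * K * E)) * E" by (simp add: algebra_simps)
  also have "\<dots> \<le> 1 * E" using mk E0 by (intro mult_right_mono) auto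
  finally have a: "M * K * (2 * (E * E)) \<le> E" by simp
  have "2 * (M - 1)\<^sup>2 + 1 \<le> 2 * M * Q"
  proof -
    have "2 * M * Q \<ge> 4 * Q" using M2 QK K1 by (intro mult_right_mono) auto
    thus ?thesis using QM QK K1 by linarith
  qed
  hence "(2 * (M - 1)\<^sup>2 + 1) * E \<le> (2 * M * Q) * E" using E0 by (intro mult_right_mono) auto
  thus ?thesis using le2 a by (simp add: algebra_simps)
qed


theorem corollary2:
  fixes P :: "nat \<Rightarrow> 'a::finite pmf"
    and \<pi> :: "nat \<Rightarrow> real"
    and M N n :: nat
    and dec :: "(nat \<Rightarrow> nat \<Rightarrow> 'a) \<Rightarrow> (nat \<Rightarrow> 'a) \<Rightarrow> nat"
  assumes "M \<ge> 2" and "n \<ge> 1" and "N \<ge> 1"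
    and "\<forall>i\<in>{1..M}. \<pi> i > 0" and "(\<Sum>i\<in>{1..M}. \<pi> i) = 1"
    and "\<forall>t\<in>train_space M N. \<forall>x\<in>test_space n.
           dec t x \<in> {1..M} \<and> (\<forall>j\<in>{1..M}. dgl_score M N n t x (dec t x) \<le> dgl_score M N n t x j)"
  shows "let \<alpha> = real N / real n;
             D = Min {tv_dist (P i) (P j) | i j. i \<in> {1..M} \<and> j \<in> {1..M} \<and> i \<noteq> j};
             X = real (card (UNIV :: 'a set))
         in err_prob M N n P \<pi> dec
            \<le> 2 * real M * exp (- real n * (2 * \<alpha> * D\<^sup>2 / (3 * X + 2 * sqrt \<alpha>)\<^sup>2
                 - max (2 * ln (real M - 1) / real n) (ln X / real n)))"
proof -
  note M2 = assms(1) and n1 = assms(2) and N1 = assms(3) and \<pi>pos = assms(4) and \<pi>sum = assms(5)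
    and decok = assms(6)
  define \<alpha> where "\<alpha> = real N / real n"
  define DS where "DS = {tv_dist (P i) (P j) | i j. i \<in> {1..M} \<and> j \<in> {1..M} \<and> i \<noteq> j}"
  define D where "D = Min DS"
  define K where "K = real (card (UNIV :: 'a set))"
  have K1: "K \<ge> 1" unfolding K_def by (simp add: Suc_le_eq)
  have finDS: "finite DS"
  proof -
    have "DS \<subseteq> (\<lambda>(i,j). tv_dist (P i) (P j)) ` ({1..M} \<times> {1..M})" unfolding DS_def by force
    thus ?thesis by (rule finite_subset) simp
  qed
  have inDS: "tv_dist (P 1) (P 2) \<in> DS" unfolding DS_def using M2 by force
  have Dp: "\<forall>k\<in>{1..M}. \<forall>l\<in>{1..M}. k \<noteq> l \<longrightarrow> D \<le> tv_dist (P k) (P l)"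
    unfolding D_def
  proof (intro ballI impI Min_le finDS)
    fix k l assume "k \<in> {1..M}" "l \<in> {1..M}" "k \<noteq> l"
    thus "tv_dist (P k) (P l) \<in> DS" unfolding DS_def by blast
  qed
  have tv0: "tv_dist p q \<ge> 0" for p q :: "'a pmf" unfolding tv_dist_def by (simp add: sum_nonneg)
  have D0: "D \<ge> 0"
  proof -
    have "D \<in> DS" unfolding D_def using finDS inDS by (intro Min_in) auto
    thus ?thesis using tv0 unfolding DS_def by auto
  qed
  have npos: "real n > 0" using n1 by simp
  have a0: "\<alpha> > 0" unfolding \<alpha>_def using n1 N1 by simp
  have na: "real n * \<alpha> = real N" unfolding \<alpha>_def using npos by simp
  define c where "c = 3 * K + 2 * sqrt \<alpha>"
  have c0: "c > 0" unfolding c_def using K1 a0 by (smt (verit) real_sqrt_ge_zero)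
  define s where "s = D / c"
  have s0: "s \<ge> 0" unfolding s_def using D0 c0 by simp
  define s1 where "s1 = 3 / 2 * s"
  define s2 where "s2 = sqrt \<alpha> * s"
  have s10: "s1 \<ge> 0" unfolding s1_def using s0 by simp
  have s20: "s2 \<ge> 0" unfolding s2_def using s0 a0 by (simp add: mult_nonneg_nonneg)
  have Deq: "2 * K * s1 + 2 * s2 \<le> D"
  proof -
    have "2 * K * s1 + 2 * s2 = s * c" unfolding s1_def s2_def c_def by (simp add: algebra_simps)
    also have "\<dots> = D" unfolding s_def using c0 by simp
    finally show ?thesis by simp
  qed
  define E where "E = exp (-2 * real N * s\<^sup>2)"
  have E0: "E \<ge> 0" unfolding E_def by simp
  define Q where "Q = max ((real M - 1)\<^sup>2) K"
  have e1: "exp (-2 * real N * s1\<^sup>2) \<le> E * E"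
  proof -
    have "E * E = exp (-4 * real N * s\<^sup>2)" unfolding E_def by (simp only: mult_exp_exp) (simp add: algebra_simps)
    moreover have "-2 * real N * s1\<^sup>2 \<le> -4 * real N * s\<^sup>2"
    proof -
      have "0 \<le> real N * s\<^sup>2" by simp
      thus ?thesis unfolding s1_def by (simp add: power2_eq_square algebra_simps)
    qed
    ultimately show ?thesis by simp
  qed
  have e2: "exp (-2 * real n * s2\<^sup>2) = E"
  proof -
    have "real n * s2\<^sup>2 = real N * s\<^sup>2" unfolding s2_def using a0 na
      by (simp add: power_mult_distrib mult.assoc[symmetric])
    thus ?thesis unfolding E_def by (simp add: mult.assoc)
  qed
  have Mm: "real ((M - 1) * (M - 1)) = (real M - 1)\<^sup>2" using M2 by (simp add: of_nat_diff power2_eq_square)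
  have Ei: "(\<Sum>t\<in>train_space M N. \<Sum>x\<in>test_space n. (if dec t x \<noteq> i then joint_prob M N n P i t x else 0))
      \<le> 2 * real M * Q * E" if i: "i \<in> {1..M}" for i
  proof (rule final_arith)
    show "real M \<ge> 2" using M2 by simp
    show "K \<ge> 1" by (rule K1)
    show "Q \<ge> K" "Q \<ge> (real M - 1)\<^sup>2" unfolding Q_def by auto
    show "E \<ge> 0" by (rule E0)
    show "(\<Sum>t\<in>train_space M N. \<Sum>x\<in>test_space n. (if dec t x \<noteq> i then joint_prob M N n P i t x else 0)) \<le> 1"
      by (rule per_i_le1) (use M2 in simp)
    have "(\<Sum>t\<in>train_space M N. \<Sum>x\<in>test_space n. (if dec t x \<noteq> i then joint_prob M N n P i t x else 0))
      \<le> real M * K * (2 * exp (-2 * real N * s1\<^sup>2)) + real ((M - 1) * (M - 1)) * (2 * exp (-2 * real n * s2\<^sup>2))"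
      unfolding K_def by (rule per_i[OF M2 n1 N1 decok i Dp s10 s20]) (use Deq in \<open>simp add: K_def\<close>)
    also have "\<dots> \<le> real M * K * (2 * (E * E)) + (real M - 1)\<^sup>2 * (2 * E)"
      unfolding Mm e2 using e1 K1 by (intro add_mono mult_left_mono) auto
    finally show "(\<Sum>t\<in>train_space M N. \<Sum>x\<in>test_space n. (if dec t x \<noteq> i then joint_prob M N n P i t x else 0))
      \<le> real M * K * (2 * (E * E)) + (real M - 1)\<^sup>2 * (2 * E)" .
  qed
  have err: "err_prob M N n P \<pi> dec \<le> 2 * real M * Q * E"
  proof -
    have "err_prob M N n P \<pi> dec \<le> (\<Sum>i\<in>{1..M}. \<pi> i * (2 * real M * Q * E))"
      unfolding err_prob_def using \<pi>pos Ei by (intro sum_mono mult_left_mono) (auto simp: less_imp_le)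
    also have "\<dots> = 2 * real M * Q * E" using \<pi>sum by (simp add: sum_distrib_right[symmetric])
    finally show ?thesis .
  qed
  have rhs: "2 * real M * exp (- real n * (2 * \<alpha> * D\<^sup>2 / c\<^sup>2
                 - max (2 * ln (real M - 1) / real n) (ln K / real n))) = 2 * real M * Q * E"
  proof -
    have m: "real n * max (2 * ln (real M - 1) / real n) (ln K / real n) = max (2 * ln (real M - 1)) (ln K)"
      using npos by (cases "2 * ln (real M - 1) \<le> ln K") (auto simp: max_def divide_le_cancel)
    have t1: "real n * (2 * \<alpha> * D\<^sup>2 / c\<^sup>2) = 2 * real N * s\<^sup>2"
      unfolding s_def using na by (simp add: power_divide algebra_simps)
    have ex: "exp (max (2 * ln (real M - 1)) (ln K)) = Q"
    proof -
      have "exp (2 * ln (real M - 1)) = (real M - 1)\<^sup>2"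
      proof -
        have y: "real M - 1 > 0" using M2 by simp
        have "exp (2 * ln (real M - 1)) = exp (ln (real M - 1) + ln (real M - 1))" by simp
        also have "\<dots> = (real M - 1) * (real M - 1)" unfolding exp_add using y by simp
        finally show ?thesis by (simp add: power2_eq_square)
      qed
      moreover have "exp (ln K) = K" using K1 by simp
      moreover have "exp (max a b) = max (exp a) (exp b)" for a b :: real
        by (cases "a \<le> b") (auto simp: max_def)
      ultimately show ?thesis unfolding Q_def by simp
    qed
    have "- real n * (2 * \<alpha> * D\<^sup>2 / c\<^sup>2 - max (2 * ln (real M - 1) / real n) (ln K / real n))
        = -2 * real N * s\<^sup>2 + max (2 * ln (real M - 1)) (ln K)"
      using m t1 by (simp add: algebra_simps)
    hence "exp (- real n * (2 * \<alpha> * D\<^sup>2 / c\<^sup>2 - max (2 * ln (real M - 1) / real n) (ln K / real n))) = E * Q"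
      unfolding E_def by (simp only: exp_add ex)
    thus ?thesis by simp
  qed
  show ?thesis unfolding Let_def
    unfolding \<alpha>_def[symmetric] DS_def[symmetric] D_def[symmetric] K_def[symmetric] c_def[symmetric] rhs
    by (rule err)
qed

end
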